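(* Assume the standing setting with (H1), (H2), (P), let $\delta>0$ be the constant of Lemma 3.4 (so that for every hyperbolic time $n$ of $x$, $f^n$ maps $B(x,n,\delta)$ homeomorphically onto $B(f^n(x),\delta)$ with $d(f^{n-j}y,f^{n-j}z)\le e^{-cj/2}d(f^ny,f^nz)$ for $1\le j\le n$), let $\lambda\ge e^{h(f)+\inf\phi}$ be an eigenvalue of $\mathcal L_\phi^*$, $\nu$ a probability with $\mathcal L_\phi^*\nu=\lambda\nu$, and $P=\log\lambda$. Then there exists $K>0$ such that, if $n$ is a hyperbolic time for $x\in\operatorname{supp}(\nu)$, then $K^{-1}\le \nu(B(x,n,\delta))/e^{-Pn+S_n\phi(y)}\le K$ for every $y\in B(x,n,\delta)$.
   Context: Standing setting. $(M,d)$ is a compact metric space of dimension $m$ in which the Besicovitch covering lemma holds. $f:M\to M$ is a local homeomorphism such that every point has finitely many preimages, each set $\{x:\#f^{-1}(x)=k\}$ is closed, and there is a bounded function $L:M\to(0,\infty)$ such that every $x\in M$ has a neighbourhood $U_x$ on which $f$ is injective and $d(f_x^{-1}(y),f_x^{-1}(z))\le L(x)\,d(y,z)$ for all $y,z\in f(U_x)$, where $f_x^{-1}$ is the inverse of $f|_{U_x}$. Let $h(f)=\liminf_{n\to\infty}\frac1n\log\min_{x\in M}\#f^{-n}(x)$; it is assumed that every point of $M$ has at least $e^{h(f)}$ preimages. $\phi:M\to\mathbb R$ is Hölder continuous. Hypotheses: (H2) there is a cover $\mathcal P=\{P_1,\dots,P_{k_0}\}$ of $M$ by sets on which $f$ is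 injective and an open set $\mathcal A\subset P_1\cup\dots\cup P_q$ for some integer $q<e^{h(f)}$. (P) $\sup\phi-\inf\phi<h(f)-\log q$. For $\gamma\in(0,1)$ let $I(\gamma,n)$ be the set of $(i_0,\dots,i_{n-1})\in\{1,\dots,k_0\}^n$ with $\#\{0\le j\le n-1: i_j\le q\}>\gamma n$ and $c_\gamma=\limsup_n\frac1n\log\#I(\gamma,n)$. Fix $\varepsilon_0>0$ with $\sup\phi-\inf\phi+\varepsilon_0<h(f)-\log q$ and $\gamma\in(0,1)$ with $c_\gamma<\log q+\varepsilon_0/4$. (H1) there are constants $\sigma>1$, $L>0$, $c>0$ with $L(x)\le L$ for $x\in\mathcal A$, $L(x)\le\sigma^{-1}$ for $x\in M\setminus\mathcal A$, $\sigma^{-(1-\gamma)}L^\gamma<e^{-2c}<1$, and $\sup\phi-\inf\phi<h(f)-\log q-\varepsilon_0-m\log L$. $\mathcal L_\phi g(x)=\sum_{f(y)=x}e^{\phi(y)}g(y)$ with dual $\mathcal L_\phi^*$ on measures. Hyperbolic time: $n\ge1$ with $\prod_{j=n-k}^{n-1}L(f^jx)<e^{-ck}$ for $1\le k\le n$. $B(x,n,\delta)=\{y:d(f^jy,f^jx)\le\delta,0\le j\le n\}$, $S_n\phi=\sum_{j=0}^{n-1}\phi\circ f^j$. *)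

theory Defs
  imports "HOL-Analysis.Analysis" "HOL-Probability.Probability"
begin

definition preim :: "'a set \<Rightarrow> ('a \<Rightarrow> 'a) \<Rightarrow> nat \<Rightarrow> 'a \<Rightarrow> 'a set" where
  "preim M f n x = {y \<in> M. (f ^^ n) y = x}"

definition eln :: "nat \<Rightarrow> ereal" where
  "eln k = (if k = 0 then - \<infinity> else ereal (ln (real k)))"

definition deg_entropy :: "'a set \<Rightarrow> ('a \<Rightarrow> 'a) \<Rightarrow> ereal" where
  "deg_entropy M f =
     liminf (\<lambda>n. eln (INF x\<in>M. card (preim M f n x)) / ereal (real n))"

definition besicovitch_property :: "'a::metric_space set \<Rightarrow> bool" where
  "besicovitch_property M \<longleftrightarrow> (\<exists>N::nat. \<forall>A r. A \<subseteq> M \<and> (\<forall>a\<in>A. 0 < r a) \<and> bdd_above (r ` A) \<longrightarrow>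
      (\<exists>C\<subseteq>A. A \<subseteq> (\<Union>c\<in>C. cball c (r c)) \<and>
         (\<forall>x\<in>M. finite {c\<in>C. x \<in> cball c (r c)} \<and> card {c\<in>C. x \<in> cball c (r c)} \<le> N)))"

text \<open>Dimension m, read as a box-counting bound: M is covered by at most C r^(-m) balls of radius r.\<close>
definition has_dimension :: "'a::metric_space set \<Rightarrow> nat \<Rightarrow> bool" where
  "has_dimension M m \<longleftrightarrow> (\<exists>C>0. \<forall>r. 0 < r \<and> r \<le> 1 \<longrightarrow>
      (\<exists>F. finite F \<and> F \<subseteq> M \<and> M \<subseteq> (\<Union>z\<in>F. cball z r) \<and> real (card F) \<le> C * r powr (- real m)))"

definition local_homeo :: "'a::metric_space set \<Rightarrow> ('a \<Rightarrow> 'a) \<Rightarrow> bool" where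
  "local_homeo M f \<longleftrightarrow> f \<in> M \<rightarrow> M \<and> continuous_on M f \<and>
     (\<forall>x\<in>M. \<exists>U V g. openin (top_of_set M) U \<and> x \<in> U \<and> openin (top_of_set M) V \<and>
        homeomorphism U V f g)"

definition holder_on :: "'a::metric_space set \<Rightarrow> ('a \<Rightarrow> real) \<Rightarrow> bool" where
  "holder_on M \<phi> \<longleftrightarrow> (\<exists>C \<alpha>. 0 \<le> C \<and> 0 < \<alpha> \<and> \<alpha> \<le> 1 \<and>
      (\<forall>x\<in>M. \<forall>y\<in>M. \<bar>\<phi> x - \<phi> y\<bar> \<le> C * dist x y powr \<alpha>))"

definition dyn_ball :: "'a::metric_space set \<Rightarrow> ('a \<Rightarrow> 'a) \<Rightarrow> 'a \<Rightarrow> nat \<Rightarrow> real \<Rightarrow> 'a set" where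
  "dyn_ball M f x n \<delta> = {y \<in> M. \<forall>j\<le>n. dist ((f ^^ j) y) ((f ^^ j) x) \<le> \<delta>}"

definition birkhoff_sum :: "('a \<Rightarrow> 'a) \<Rightarrow> ('a \<Rightarrow> real) \<Rightarrow> nat \<Rightarrow> 'a \<Rightarrow> real" where
  "birkhoff_sum f \<phi> n y = (\<Sum>j<n. \<phi> ((f ^^ j) y))"

definition hyp_time :: "('a \<Rightarrow> 'a) \<Rightarrow> ('a \<Rightarrow> real) \<Rightarrow> real \<Rightarrow> 'a \<Rightarrow> nat \<Rightarrow> bool" where
  "hyp_time f Lf c x n \<longleftrightarrow> 1 \<le> n \<and>
     (\<forall>k\<in>{1..n}. (\<Prod>j\<in>{n-k..n-1}. Lf ((f ^^ j) x)) < exp (- c * real k))"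

definition transfer_op :: "'a set \<Rightarrow> ('a \<Rightarrow> 'a) \<Rightarrow> ('a \<Rightarrow> real) \<Rightarrow> ('a \<Rightarrow> real) \<Rightarrow> 'a \<Rightarrow> real" where
  "transfer_op M f \<phi> g x = (\<Sum>y\<in>preim M f 1 x. exp (\<phi> y) * g y)"

definition itin_set :: "nat \<Rightarrow> nat \<Rightarrow> real \<Rightarrow> nat \<Rightarrow> (nat \<Rightarrow> nat) set" where
  "itin_set k0 q \<gamma> n = {w \<in> PiE {..<n} (\<lambda>_. {1..k0}). real (card {j\<in>{..<n}. w j \<le> q}) > \<gamma> * real n}"

definition c_gamma :: "nat \<Rightarrow> nat \<Rightarrow> real \<Rightarrow> ereal" where
  "c_gamma k0 q \<gamma> = limsup (\<lambda>n. eln (card (itin_set k0 q \<gamma> n)) / ereal (real n))"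

definition msupp :: "'a::metric_space set \<Rightarrow> 'a measure \<Rightarrow> 'a set" where
  "msupp M \<nu> = {x \<in> M. \<forall>r>0. 0 < emeasure \<nu> (M \<inter> ball x r)}"

end

theory Submission imports Defs begin

locale conf =
  fixes M :: "'a::metric_space set" and f :: "'a \<Rightarrow> 'a" and \<phi> :: "'a \<Rightarrow> real" and lam :: real and \<nu> :: "'a measure"
  assumes compM: "compact M" and lh: "local_homeo M f" and fin: "\<forall>x\<in>M. finite (preim M f 1 x)"
   and phic: "continuous_on M \<phi>" and lam: "0 < lam" and prob: "prob_space \<nu>"
   and setsnu: "sets \<nu> = sets (restrict_space borel M)"
   and eig: "\<forall>g. continuous_on M g \<longrightarrow> (\<integral>x. transfer_op M f \<phi> g x \<partial>\<nu>) = lam * (\<integral>x. g x \<partial>\<nu>)"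
begin

sublocale P: prob_space \<nu> by (rule prob)

lemma spaceM: "space \<nu> = M"
  using sets_eq_imp_space_eq[OF setsnu] by (simp add: space_restrict_space)

lemma closedM: "closed M" using compM compact_imp_closed by blast

lemma sets_open: assumes "openin (top_of_set M) U" shows "U \<in> sets \<nu>"
proof -
  obtain T where "open T" "U = M \<inter> T" using assms openin_open by blast
  then show ?thesis unfolding setsnu sets_restrict_space by auto
qed

lemma sets_closed: assumes "closed C" shows "M \<inter> C \<in> sets \<nu>"
  using assms unfolding setsnu sets_restrict_space by auto

lemma sets_compact: assumes "compact K" "K \<subseteq> M" shows "K \<in> sets \<nu>"
  using sets_closed[OF compact_imp_closed[OF assms(1)]] assms(2) by (simp add: Int_absorb1)

lemma meas_cont: assumes "continuous_on M h" shows "h \<in> borel_measurable \<nu>"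
  using borel_measurable_continuous_on_restrict[OF assms] measurable_cong_sets[OF setsnu refl] by blast

lemma sets_sigma: "sets \<nu> = sigma_sets M ((\<inter>) M ` {S. open S})"
proof -
  have "M \<in> sigma_sets UNIV {S. open S}" using closedM sets_borel by (metis borel_closed)
  then show ?thesis unfolding setsnu sets_restrict_space sets_borel
    using sigma_sets_Int[of M UNIV "{S. open S}"] by simp
qed

lemma f_props: "f \<in> M \<rightarrow> M" "continuous_on M f"
  using lh unfolding local_homeo_def by auto

lemma meas_borel: assumes "u \<in> borel_measurable borel" shows "u \<in> borel_measurable \<nu>"
  using measurable_restrict_space1[OF assms, of M] measurable_cong_sets[OF setsnu refl] by blast

lemma phi_bdd: obtains b where "\<forall>x\<in>M. \<bar>\<phi> x\<bar> \<le> b"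
proof -
  have "bounded (\<phi> ` M)" using compact_imp_bounded[OF compact_continuous_image[OF phic compM]] .
  then obtain b where "\<forall>y\<in>\<phi> ` M. norm y \<le> b" unfolding bounded_iff by blast
  then show ?thesis using that by auto
qed

lemma int_ind_exp: assumes "A \<in> sets \<nu>" shows "integrable \<nu> (\<lambda>x. indicator A x * exp (- \<phi> x))"
proof -
  obtain b where b: "\<forall>x\<in>M. \<bar>\<phi> x\<bar> \<le> b" using phi_bdd by blast
  have m: "(\<lambda>x. exp (- \<phi> x)) \<in> borel_measurable \<nu>" by (intro meas_cont continuous_intros phic)
  show ?thesis
  proof (rule P.integrable_const_bound[where B="exp b"])
    show "AE x in \<nu>. norm (indicator A x * exp (- \<phi> x)) \<le> exp b"
    proof (rule AE_I2)
      fix x assume "x \<in> space \<nu>"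
      then have "- \<phi> x \<le> b" using b spaceM by force
      then show "norm (indicator A x * exp (- \<phi> x)) \<le> exp b" by (auto simp: indicator_def)
    qed
    show "(\<lambda>x. indicator A x * exp (- \<phi> x)) \<in> borel_measurable \<nu>" using m assms by simp
  qed
qed

lemma nn_ind: assumes "A \<in> sets \<nu>"
  shows "(\<integral>\<^sup>+x. ennreal (lam * indicator A x * exp (- \<phi> x)) \<partial>\<nu>) = ennreal (lam * (\<integral>x. indicator A x * exp (- \<phi> x) \<partial>\<nu>))"
proof -
  have "(\<integral>\<^sup>+x. ennreal (lam * indicator A x * exp (- \<phi> x)) \<partial>\<nu>) = ennreal (\<integral>x. lam * indicator A x * exp (- \<phi> x) \<partial>\<nu>)"
    by (rule nn_integral_eq_integral) (use int_ind_exp[OF assms] lam in \<open>auto simp: mult.assoc\<close>)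
  also have "(\<integral>x. lam * indicator A x * exp (- \<phi> x) \<partial>\<nu>) = lam * (\<integral>x. indicator A x * exp (- \<phi> x) \<partial>\<nu>)"
    by (simp add: mult.assoc)
  finally show ?thesis .
qed

context
  fixes W V g
  assumes W: "openin (top_of_set M) W" and V: "openin (top_of_set M) V"
    and hom: "homeomorphism W V f g"
begin

lemma WM: "W \<subseteq> M" using W openin_imp_subset by blast
lemma VM: "V \<subseteq> M" using V openin_imp_subset by blast
lemma hom': "\<forall>x\<in>W. g (f x) = x" "f ` W = V" "\<forall>y\<in>V. f (g y) = y" "g ` V = W"
   "continuous_on W f" "continuous_on V g"
  using hom unfolding homeomorphism_def by auto

lemma transfer_local:
  assumes h0: "\<forall>z\<in>M-W. h z = 0" and x: "x \<in> M"
  shows "transfer_op M f \<phi> (\<lambda>z. exp (- \<phi> z) * h z) x = indicator V x * h (g x)"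
proof -
  let ?S = "{y\<in>M. f y = x}"
  have finS: "finite ?S" using fin x unfolding preim_def by simp
  have "transfer_op M f \<phi> (\<lambda>z. exp (- \<phi> z) * h z) x = (\<Sum>y\<in>?S. h y)"
    unfolding transfer_op_def preim_def by (auto simp: exp_minus intro!: sum.cong)
  also have "\<dots> = indicator V x * h (g x)"
  proof (cases "x \<in> V")
    case True
    have gx: "g x \<in> ?S" using True hom' WM by auto
    have "(\<Sum>y\<in>?S. h y) = h (g x) + (\<Sum>y\<in>?S - {g x}. h y)"
      using sum.remove[OF finS gx] by simp
    also have "(\<Sum>y\<in>?S - {g x}. h y) = 0"
    proof (rule sum.neutral, rule ballI)
      fix y assume "y \<in> ?S - {g x}"
      then have "y \<in> M" "y \<noteq> g (f y)" "x = f y" by auto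
      then have "y \<notin> W" using hom' by auto
      then show "h y = 0" using h0 \<open>y \<in> M\<close> by auto
    qed
    finally show ?thesis using True by simp
  next
    case False
    have "(\<Sum>y\<in>?S. h y) = 0"
    proof (rule sum.neutral, rule ballI)
      fix y assume "y \<in> ?S"
      then have "y \<in> M" "x = f y" by auto
      then have "y \<notin> W" using hom' False by auto
      then show "h y = 0" using h0 \<open>y \<in> M\<close> by auto
    qed
    then show ?thesis using False by simp
  qed
  finally show ?thesis .
qed

lemma e1:
  assumes hc: "continuous_on M h" and h0: "\<forall>z\<in>M-W. h z = 0"
  shows "(\<integral>x. indicator V x * h (g x) \<partial>\<nu>) = lam * (\<integral>x. exp (- \<phi> x) * h x \<partial>\<nu>)"
proof -
  have c: "continuous_on M (\<lambda>z. exp (- \<phi> z) * h z)"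
    by (intro continuous_intros phic hc)
  have "(\<integral>x. indicator V x * h (g x) \<partial>\<nu>) = (\<integral>x. transfer_op M f \<phi> (\<lambda>z. exp (- \<phi> z) * h z) x \<partial>\<nu>)"
    by (intro Bochner_Integration.integral_cong refl) (simp add: transfer_local[OF h0] spaceM)
  also have "\<dots> = lam * (\<integral>x. exp (- \<phi> x) * h x \<partial>\<nu>)"
    using eig c by blast
  finally show ?thesis .
qed

lemma openin_borel: assumes "openin (top_of_set M) U" shows "U \<in> sets borel"
proof -
  obtain T where "open T" "U = M \<inter> T" using assms openin_open by blast
  then show ?thesis using closedM by auto
qed

lemma e2:
  assumes U: "openin (top_of_set M) U" "U \<subseteq> W"
  shows "f ` U \<in> sets \<nu>" "measure \<nu> (f ` U) = lam * (\<integral>x. indicator U x * exp (- \<phi> x) \<partial>\<nu>)"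
proof -
  have UW: "openin (top_of_set W) U" using openin_subset_trans[OF U(1) U(2) WM] .
  have "openin (top_of_set V) (f ` U)" using homeomorphism_imp_open_map[OF hom UW] .
  then have fUo: "openin (top_of_set M) (f ` U)" using V openin_trans by blast
  then show fU: "f ` U \<in> sets \<nu>" by (rule sets_open)
  have ind: "indicator V x * indicator U (g x) = (indicator (f ` U) x :: real)" if "x \<in> M" for x
  proof -
    have "x \<in> f ` U \<longleftrightarrow> x \<in> V \<and> g x \<in> U"
    proof
      assume "x \<in> f ` U"
      then obtain u where "u \<in> U" "x = f u" by blast
      then show "x \<in> V \<and> g x \<in> U" using hom' U(2) by auto
    next
      assume "x \<in> V \<and> g x \<in> U"
      then show "x \<in> f ` U" using hom'(3) by (metis image_eqI)
    qed
    then show ?thesis by (auto simp: indicator_def)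
  qed
  obtain b where b: "\<forall>x\<in>M. \<bar>\<phi> x\<bar> \<le> b" using phi_bdd by blast
  define d where "d x = (if M - U = {} then 1 else infdist x (M - U))" for x
  have dc: "continuous_on UNIV d"
  proof (cases "M - U = {}")
    case True then show ?thesis unfolding d_def by simp
  next
    case False then show ?thesis unfolding d_def by (simp add: continuous_on_infdist continuous_on_id)
  qed
  have closedMU: "closed (M - U)"
  proof -
    obtain T where "open T" "U = M \<inter> T" using U(1) openin_open by blast
    then have "M - U = M \<inter> (- T)" by auto
    then show ?thesis using closedM \<open>open T\<close> by (simp add: closed_Int open_closed)
  qed
  have dpos: "d x > 0" if "x \<in> U" for x
  proof (cases "M - U = {}")
    case False
    have "x \<notin> closure (M - U)" using closure_closed[OF closedMU] that by auto
    then have "infdist x (M - U) \<noteq> 0" using in_closure_iff_infdist_zero[OF False] by blast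
    then show ?thesis using False infdist_nonneg[of x "M - U"] unfolding d_def by auto
  qed (simp add: d_def)
  have d0: "d x = 0" if "x \<in> M - U" for x using that unfolding d_def by auto
  define hk where "hk k x = min 1 (real k * d x)" for k x
  have hkc: "continuous_on UNIV (hk k)" for k unfolding hk_def by (intro continuous_intros dc)
  have hk0: "\<forall>z\<in>M-W. hk k z = 0" for k
  proof
    fix z assume "z \<in> M - W"
    then have "d z = 0" using d0 U(2) by blast
    then show "hk k z = 0" unfolding hk_def by simp
  qed
  have hklim: "(\<lambda>k. hk k x) \<longlonglongrightarrow> indicator U x" if "x \<in> M" for x
  proof (rule tendsto_eventually)
    show "\<forall>\<^sub>F k in sequentially. hk k x = indicator U x"
    proof (cases "x \<in> U")
      case True
      obtain N where N: "1 / d x < real N" using reals_Archimedean2 by blast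
      have "hk k x = 1" if "k \<ge> N" for k
      proof -
        have "1 / d x < real k" using N that by linarith
        then have "1 \<le> real k * d x" using dpos[OF True] by (simp add: field_simps)
        then show ?thesis unfolding hk_def by simp
      qed
      then show ?thesis using True unfolding eventually_sequentially by auto
    next
      case False
      then show ?thesis using d0 that unfolding hk_def by auto
    qed
  qed
  have hkb: "\<bar>hk k x\<bar> \<le> 1" if "x \<in> M" for k x
  proof -
    have "d x \<ge> 0" unfolding d_def by (auto simp: infdist_nonneg)
    then show ?thesis unfolding hk_def by auto
  qed
  have Vb: "V \<in> sets borel" using openin_borel[OF V] .
  have L: "(\<lambda>k. \<integral>x. indicator V x * hk k (g x) \<partial>\<nu>) \<longlonglongrightarrow> (\<integral>x. indicator (f ` U) x \<partial>\<nu>)"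
  proof (rule integral_dominated_convergence[where w="\<lambda>x. 1"])
    show "indicator (f ` U) \<in> borel_measurable \<nu>" using fU by simp
    show "(\<lambda>x. indicator V x * hk k (g x)) \<in> borel_measurable \<nu>" for k
    proof -
      have "continuous_on V (\<lambda>x. hk k (g x))"
        by (rule continuous_on_compose2[OF hkc hom'(6)]) auto
      from borel_measurable_continuous_on_indicator[OF Vb this]
      show ?thesis by (intro meas_borel) simp
    qed
    show "integrable \<nu> (\<lambda>x. 1)" by simp
    show "AE x in \<nu>. (\<lambda>k. indicator V x * hk k (g x)) \<longlonglongrightarrow> indicator (f ` U) x"
    proof (rule AE_I2)
      fix x assume x: "x \<in> space \<nu>"
      show "(\<lambda>k. indicator V x * hk k (g x)) \<longlonglongrightarrow> indicator (f ` U) x"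
      proof (cases "x \<in> V")
        case True
        have "g x \<in> M" using True hom' WM by auto
        then have "(\<lambda>k. indicator V x * hk k (g x)) \<longlonglongrightarrow> indicator V x * indicator U (g x)"
          by (intro tendsto_mult tendsto_const hklim)
        then show ?thesis using ind x spaceM by simp
      next
        case False
        then show ?thesis using ind[of x] x spaceM by simp
      qed
    qed
    show "AE x in \<nu>. norm (indicator V x * hk k (g x)) \<le> 1" for k
    proof (rule AE_I2)
      fix x assume x: "x \<in> space \<nu>"
      show "norm (indicator V x * hk k (g x)) \<le> 1"
      proof (cases "x \<in> V")
        case True
        have "g x \<in> M" using True hom' WM by auto
        then show ?thesis using hkb True by simp
      qed simp
    qed
  qed
  have R: "(\<lambda>k. \<integral>x. exp (- \<phi> x) * hk k x \<partial>\<nu>) \<longlonglongrightarrow> (\<integral>x. indicator U x * exp (- \<phi> x) \<partial>\<nu>)"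
  proof (rule integral_dominated_convergence[where w="\<lambda>x. exp b"])
    have "U \<in> sets \<nu>" using sets_open[OF U(1)] .
    moreover have "(\<lambda>x. exp (- \<phi> x)) \<in> borel_measurable \<nu>"
      by (intro meas_cont continuous_intros phic)
    ultimately show "(\<lambda>x. indicator U x * exp (- \<phi> x)) \<in> borel_measurable \<nu>" by simp
    show "(\<lambda>x. exp (- \<phi> x) * hk k x) \<in> borel_measurable \<nu>" for k
      by (intro meas_cont continuous_intros phic continuous_on_subset[OF hkc]) auto
    show "integrable \<nu> (\<lambda>x. exp b)" by simp
    show "AE x in \<nu>. (\<lambda>k. exp (- \<phi> x) * hk k x) \<longlonglongrightarrow> indicator U x * exp (- \<phi> x)"
      by (rule AE_I2) (auto simp: spaceM intro!: tendsto_eq_intros hklim)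
    show "AE x in \<nu>. norm (exp (- \<phi> x) * hk k x) \<le> exp b" for k
    proof (rule AE_I2)
      fix x assume x: "x \<in> space \<nu>"
      then have "x \<in> M" using spaceM by simp
      have "norm (exp (- \<phi> x) * hk k x) = exp (- \<phi> x) * \<bar>hk k x\<bar>" by (simp add: abs_mult)
      also have "\<dots> \<le> exp b * 1"
        using hkb[OF \<open>x \<in> M\<close>] b \<open>x \<in> M\<close> by (intro mult_mono) auto
      finally show "norm (exp (- \<phi> x) * hk k x) \<le> exp b" by simp
    qed
  qed
  have eq: "(\<integral>x. indicator V x * hk k (g x) \<partial>\<nu>) = lam * (\<integral>x. exp (- \<phi> x) * hk k x \<partial>\<nu>)" for k
    using e1[OF continuous_on_subset[OF hkc] hk0] by simp
  have "(\<lambda>k. \<integral>x. indicator V x * hk k (g x) \<partial>\<nu>) \<longlonglongrightarrow> lam * (\<integral>x. indicator U x * exp (- \<phi> x) \<partial>\<nu>)"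
    unfolding eq by (intro tendsto_mult tendsto_const R)
  with L have "(\<integral>x. indicator (f ` U) x \<partial>\<nu>) = lam * (\<integral>x. indicator U x * exp (- \<phi> x) \<partial>\<nu>)"
    using LIMSEQ_unique by blast
  then show "measure \<nu> (f ` U) = lam * (\<integral>x. indicator U x * exp (- \<phi> x) \<partial>\<nu>)"
    using fU by (simp add: Int_absorb2 sets.sets_into_space)
qed

lemma e3:
  assumes A: "A \<in> sets \<nu>" "A \<subseteq> W"
  shows "f ` A \<in> sets \<nu>" "measure \<nu> (f ` A) = lam * (\<integral>x. indicator A x * exp (- \<phi> x) \<partial>\<nu>)"
proof -
  have Mb: "M \<in> sets borel" using closedM by simp
  have Vb: "V \<in> sets borel" using openin_borel[OF V] .
  have Vn: "V \<in> sets \<nu>" using sets_open[OF V] .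
  have gm: "g \<in> measurable (restrict_space \<nu> V) \<nu>"
  proof -
    have "g \<in> measurable (restrict_space borel V) borel"
      using borel_measurable_continuous_on_restrict[OF hom'(6)] .
    then have "g \<in> measurable (restrict_space borel V) (restrict_space borel M)"
      using hom'(4) WM by (intro measurable_restrict_space2) (auto simp: space_restrict_space)
    moreover have "sets (restrict_space \<nu> V) = sets (restrict_space borel V)"
    proof -
      have "sets (restrict_space \<nu> V) = sets (restrict_space (restrict_space borel M) V)"
        by (rule sets_restrict_space_cong[OF setsnu])
      also have "restrict_space (restrict_space borel M) V = restrict_space borel (M \<inter> V)"
        by (rule restrict_restrict_space) (use Mb Vb in auto)
      also have "M \<inter> V = V" using VM by auto
      finally show ?thesis .
    qed
    ultimately show ?thesis using measurable_cong_sets[OF _ setsnu[symmetric]] by blast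
  qed
  have pre: "g -` X \<inter> V = f ` (X \<inter> W)" for X
  proof
    show "g -` X \<inter> V \<subseteq> f ` (X \<inter> W)"
    proof
      fix y assume "y \<in> g -` X \<inter> V"
      then have "g y \<in> X \<inter> W" "f (g y) = y" using hom' by auto
      then show "y \<in> f ` (X \<inter> W)" by (metis image_eqI)
    qed
    show "f ` (X \<inter> W) \<subseteq> g -` X \<inter> V" using hom' by auto
  qed
  have spV: "space (restrict_space \<nu> V) = V" using VM by (simp add: space_restrict_space spaceM Int_absorb2)
  define \<rho>1 where "\<rho>1 = distr (restrict_space \<nu> V) \<nu> g"
  define \<rho>2 where "\<rho>2 = density \<nu> (\<lambda>x. ennreal (lam * indicator W x * exp (- \<phi> x)))"
  have dm: "(\<lambda>x. ennreal (lam * indicator W x * exp (- \<phi> x))) \<in> borel_measurable \<nu>"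
  proof -
    have "W \<in> sets \<nu>" using sets_open[OF W] .
    moreover have "(\<lambda>x. exp (- \<phi> x)) \<in> borel_measurable \<nu>" by (intro meas_cont continuous_intros phic)
    ultimately show ?thesis by simp
  qed
  have r1: "emeasure \<rho>1 X = emeasure \<nu> (f ` (X \<inter> W))" if "X \<in> sets \<nu>" for X
  proof -
    have "emeasure \<rho>1 X = emeasure (restrict_space \<nu> V) (g -` X \<inter> V)"
      unfolding \<rho>1_def using emeasure_distr[OF gm that] spV by simp
    also have "\<dots> = emeasure \<nu> (g -` X \<inter> V)"
      by (rule emeasure_restrict_space) (use Vn spaceM VM in auto)
    finally show ?thesis unfolding pre .
  qed
  have r2: "emeasure \<rho>2 X = ennreal (lam * (\<integral>x. indicator (X \<inter> W) x * exp (- \<phi> x) \<partial>\<nu>))" if "X \<in> sets \<nu>" for X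
  proof -
    have XW: "X \<inter> W \<in> sets \<nu>" using that sets_open[OF W] by auto
    have "emeasure \<rho>2 X = (\<integral>\<^sup>+x. ennreal (lam * indicator W x * exp (- \<phi> x)) * indicator X x \<partial>\<nu>)"
      unfolding \<rho>2_def using emeasure_density[OF dm that] .
    also have "\<dots> = (\<integral>\<^sup>+x. ennreal (lam * indicator (X \<inter> W) x * exp (- \<phi> x)) \<partial>\<nu>)"
      by (intro nn_integral_cong) (auto simp: indicator_def)
    also have "\<dots> = ennreal (lam * (\<integral>x. indicator (X \<inter> W) x * exp (- \<phi> x) \<partial>\<nu>))"
      using nn_ind[OF XW] .
    finally show ?thesis .
  qed
  have "\<rho>1 = \<rho>2"
  proof (rule measure_eqI_generator_eq[where E="(\<inter>) M ` {S. open S}" and \<Omega>=M and A="\<lambda>i. M"])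
    show "Int_stable ((\<inter>) M ` {S. open S})"
    proof (rule Int_stableI)
      fix a b assume "a \<in> (\<inter>) M ` {S. open S}" "b \<in> (\<inter>) M ` {S. open S}"
      then obtain Ta Tb where "open Ta" "a = M \<inter> Ta" "open Tb" "b = M \<inter> Tb" by auto
      then have "a \<inter> b = M \<inter> (Ta \<inter> Tb)" "open (Ta \<inter> Tb)" by auto
      then show "a \<inter> b \<in> (\<inter>) M ` {S. open S}" by blast
    qed
    show "(\<inter>) M ` {S. open S} \<subseteq> Pow M" by auto
    show "sets \<rho>1 = sigma_sets M ((\<inter>) M ` {S. open S})" unfolding \<rho>1_def using sets_sigma by simp
    show "sets \<rho>2 = sigma_sets M ((\<inter>) M ` {S. open S})" unfolding \<rho>2_def using sets_sigma by simp
    show "range (\<lambda>i. M) \<subseteq> (\<inter>) M ` {S. open S}" by (auto intro!: image_eqI[where x=UNIV])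
    show "(\<Union>i. M) = M" by simp
    show "emeasure \<rho>1 M \<noteq> \<infinity>" for i::nat
      using r1[of M] sets.top[of \<nu>] spaceM by simp
    fix X assume "X \<in> (\<inter>) M ` {S. open S}"
    then obtain T where T: "open T" "X = M \<inter> T" by auto
    then have Xs: "X \<in> sets \<nu>" using sets_open openin_open_Int by blast
    have Uo: "openin (top_of_set M) (X \<inter> W)" using T W by (simp add: openin_Int openin_open_Int)
    show "emeasure \<rho>1 X = emeasure \<rho>2 X"
      unfolding r1[OF Xs] r2[OF Xs]
      using e2[OF Uo] P.emeasure_eq_measure by auto
  qed
  have fA: "f ` A = g -` A \<inter> V" using pre[of A] A(2) by (simp add: Int_absorb2)
  have "g -` A \<inter> space (restrict_space \<nu> V) \<in> sets (restrict_space \<nu> V)"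
    using measurable_sets[OF gm A(1)] .
  then show fAs: "f ` A \<in> sets \<nu>" unfolding fA spV using sets_restrict_space_iff[of V \<nu>] Vn spaceM VM
    by (simp add: Int_absorb2)
  have "emeasure \<nu> (f ` A) = ennreal (lam * (\<integral>x. indicator A x * exp (- \<phi> x) \<partial>\<nu>))"
    using r1[OF A(1)] r2[OF A(1)] \<open>\<rho>1 = \<rho>2\<close> A(2) by (simp add: Int_absorb2)
  moreover have "0 \<le> lam * (\<integral>x. indicator A x * exp (- \<phi> x) \<partial>\<nu>)"
    using lam by (intro mult_nonneg_nonneg integral_nonneg) auto
  ultimately show "measure \<nu> (f ` A) = lam * (\<integral>x. indicator A x * exp (- \<phi> x) \<partial>\<nu>)"
    using P.emeasure_eq_measure by simp
qed

lemma e3b: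
  assumes A: "A \<in> sets \<nu>" "A \<subseteq> W" and ab: "\<forall>w\<in>A. a \<le> exp (- \<phi> w) \<and> exp (- \<phi> w) \<le> b"
  shows "f ` A \<in> sets \<nu>" "lam * a * measure \<nu> A \<le> measure \<nu> (f ` A)" "measure \<nu> (f ` A) \<le> lam * b * measure \<nu> A"
proof -
  show "f ` A \<in> sets \<nu>" using e3[OF A] by simp
  have ia: "(\<integral>x. indicator A x * a \<partial>\<nu>) = a * measure \<nu> A"
    using A(1) by (simp add: Int_absorb2 sets.sets_into_space mult.commute)
  have ib: "(\<integral>x. indicator A x * b \<partial>\<nu>) = b * measure \<nu> A"
    using A(1) by (simp add: Int_absorb2 sets.sets_into_space mult.commute)
  have intA: "integrable \<nu> (\<lambda>x. indicator A x * c)" for c :: real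
    using integrable_real_mult_indicator[OF A(1), of "\<lambda>_. c"] by (simp add: mult.commute)
  have "(\<integral>x. indicator A x * a \<partial>\<nu>) \<le> (\<integral>x. indicator A x * exp (- \<phi> x) \<partial>\<nu>)"
    by (rule integral_mono[OF intA int_ind_exp[OF A(1)]]) (use ab in \<open>auto simp: indicator_def\<close>)
  then show "lam * a * measure \<nu> A \<le> measure \<nu> (f ` A)"
    unfolding e3(2)[OF A] ia using lam by (simp add: mult.assoc)
  have "(\<integral>x. indicator A x * exp (- \<phi> x) \<partial>\<nu>) \<le> (\<integral>x. indicator A x * b \<partial>\<nu>)"
    by (rule integral_mono[OF int_ind_exp[OF A(1)] intA]) (use ab in \<open>auto simp: indicator_def\<close>)
  then show "measure \<nu> (f ` A) \<le> lam * b * measure \<nu> A"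
    unfolding e3(2)[OF A] ib using lam by (simp add: mult.assoc)
qed

end

lemma stepF:
  assumes E: "E \<in> sets \<nu>" "inj_on f E" and ab: "\<forall>w\<in>E. a \<le> exp (- \<phi> w) \<and> exp (- \<phi> w) \<le> b"
  shows "f ` E \<in> sets \<nu>" "lam * a * measure \<nu> E \<le> measure \<nu> (f ` E)" "measure \<nu> (f ` E) \<le> lam * b * measure \<nu> E"
proof -
  obtain Wf Vf gf where WV: "\<forall>x\<in>M. openin (top_of_set M) (Wf x) \<and> x \<in> Wf x \<and> openin (top_of_set M) (Vf x) \<and> homeomorphism (Wf x) (Vf x) f (gf x)"
    using lh unfolding local_homeo_def by metis
  have "\<forall>x\<in>M. \<exists>T. open T \<and> Wf x = M \<inter> T" using WV openin_open by metis
  then obtain Of where Of: "\<forall>x\<in>M. open (Of x) \<and> Wf x = M \<inter> Of x" by metis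
  have "M \<subseteq> (\<Union>x\<in>M. Of x)" using WV Of by blast
  then obtain Z where Z: "Z \<subseteq> M" "finite Z" "M \<subseteq> (\<Union>x\<in>Z. Of x)"
    using compactE_image[OF compM, of M Of] Of by blast
  have cov: "M \<subseteq> (\<Union>x\<in>Z. Wf x)" using Z Of by blast
  have main: "\<forall>E. E \<in> sets \<nu> \<and> E \<subseteq> (\<Union>x\<in>Y. Wf x) \<and> inj_on f E \<and> (\<forall>w\<in>E. a \<le> exp (- \<phi> w) \<and> exp (- \<phi> w) \<le> b) \<longrightarrow>
     f ` E \<in> sets \<nu> \<and> lam * a * measure \<nu> E \<le> measure \<nu> (f ` E) \<and> measure \<nu> (f ` E) \<le> lam * b * measure \<nu> E"
    if "finite Y" "Y \<subseteq> M" for Y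
    using that
  proof (induction Y rule: finite_induct)
    case empty
    then show ?case by auto
  next
    case (insert z Y)
    show ?case
    proof (intro allI impI)
      fix E assume H: "E \<in> sets \<nu> \<and> E \<subseteq> (\<Union>x\<in>insert z Y. Wf x) \<and> inj_on f E \<and> (\<forall>w\<in>E. a \<le> exp (- \<phi> w) \<and> exp (- \<phi> w) \<le> b)"
      have zM: "z \<in> M" using insert by auto
      note Wz = WV[rule_format, OF zM]
      have Wzs: "Wf z \<in> sets \<nu>" using sets_open Wz by blast
      define E1 where "E1 = E \<inter> Wf z"
      define E2 where "E2 = E - Wf z"
      have E1s: "E1 \<in> sets \<nu>" and E2s: "E2 \<in> sets \<nu>" using H Wzs unfolding E1_def E2_def by auto
      have R1: "f ` E1 \<in> sets \<nu>" "lam * a * measure \<nu> E1 \<le> measure \<nu> (f ` E1)" "measure \<nu> (f ` E1) \<le> lam * b * measure \<nu> E1"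
        using e3b[of "Wf z" "Vf z" "gf z" E1 a b] Wz E1s H unfolding E1_def by auto
      have "E2 \<subseteq> (\<Union>x\<in>Y. Wf x)" using H unfolding E2_def by auto
      moreover have "inj_on f E2" using H unfolding E2_def by (auto intro: inj_on_subset)
      ultimately have R2: "f ` E2 \<in> sets \<nu>" "lam * a * measure \<nu> E2 \<le> measure \<nu> (f ` E2)" "measure \<nu> (f ` E2) \<le> lam * b * measure \<nu> E2"
        using insert.IH insert.prems E2s H unfolding E2_def by auto
      have EE: "E = E1 \<union> E2" "E1 \<inter> E2 = {}" unfolding E1_def E2_def by auto
      have fE: "f ` E = f ` E1 \<union> f ` E2" using EE by auto
      have disj: "f ` E1 \<inter> f ` E2 = {}"
      proof (rule ccontr)
        assume "f ` E1 \<inter> f ` E2 \<noteq> {}"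
        then obtain u v where "u \<in> E1" "v \<in> E2" "f u = f v" by blast
        then have "u = v" using H EE by (auto dest: inj_onD)
        then show False using \<open>u \<in> E1\<close> \<open>v \<in> E2\<close> EE by blast
      qed
      have mE: "measure \<nu> E = measure \<nu> E1 + measure \<nu> E2"
        using P.finite_measure_Union[OF E1s E2s EE(2)] EE(1) by simp
      have mfE: "measure \<nu> (f ` E) = measure \<nu> (f ` E1) + measure \<nu> (f ` E2)"
        using P.finite_measure_Union[OF R1(1) R2(1) disj] fE by simp
      show "f ` E \<in> sets \<nu> \<and> lam * a * measure \<nu> E \<le> measure \<nu> (f ` E) \<and> measure \<nu> (f ` E) \<le> lam * b * measure \<nu> E"
        using R1 R2 mE mfE fE by (auto simp: distrib_left)
    qed
  qed
  have "E \<subseteq> M" using E(1) sets.sets_into_space spaceM by blast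
  then have "E \<subseteq> (\<Union>x\<in>Z. Wf x)" using cov by blast
  then have "f ` E \<in> sets \<nu> \<and> lam * a * measure \<nu> E \<le> measure \<nu> (f ` E) \<and> measure \<nu> (f ` E) \<le> lam * b * measure \<nu> E"
    using main[OF Z(2) Z(1)] E ab by blast
  then show "f ` E \<in> sets \<nu>" "lam * a * measure \<nu> E \<le> measure \<nu> (f ` E)" "measure \<nu> (f ` E) \<le> lam * b * measure \<nu> E"
    by auto
qed

lemma iterG:
  assumes E: "E \<in> sets \<nu>" "inj_on (f ^^ N) E"
    and tb: "\<forall>i<N. \<forall>z\<in>E. \<bar>\<phi> ((f ^^ i) z) - \<phi> ((f ^^ i) y)\<bar> \<le> t i"
  shows "i \<le> N \<Longrightarrow> (f ^^ i) ` E \<in> sets \<nu> \<and>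
     lam ^ i * exp (- birkhoff_sum f \<phi> i y - (\<Sum>k<i. t k)) * measure \<nu> E \<le> measure \<nu> ((f ^^ i) ` E) \<and>
     measure \<nu> ((f ^^ i) ` E) \<le> lam ^ i * exp (- birkhoff_sum f \<phi> i y + (\<Sum>k<i. t k)) * measure \<nu> E"
proof (induction i)
  case 0
  then show ?case using E by (simp add: birkhoff_sum_def)
next
  case (Suc i)
  then have iN: "i < N" by simp
  from Suc.IH iN have IH: "(f ^^ i) ` E \<in> sets \<nu>"
     "lam ^ i * exp (- birkhoff_sum f \<phi> i y - (\<Sum>k<i. t k)) * measure \<nu> E \<le> measure \<nu> ((f ^^ i) ` E)"
     "measure \<nu> ((f ^^ i) ` E) \<le> lam ^ i * exp (- birkhoff_sum f \<phi> i y + (\<Sum>k<i. t k)) * measure \<nu> E"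
    by auto
  have inj: "inj_on f ((f ^^ i) ` E)"
  proof (rule inj_onI)
    fix a b assume "a \<in> (f ^^ i) ` E" "b \<in> (f ^^ i) ` E" "f a = f b"
    then obtain u v where uv: "u \<in> E" "v \<in> E" "a = (f ^^ i) u" "b = (f ^^ i) v" by blast
    have dec: "(f ^^ N) w = (f ^^ (N - Suc i)) (f ((f ^^ i) w))" for w
    proof -
      have "N = (N - Suc i) + Suc i" using iN by simp
      then have "(f ^^ N) w = (f ^^ (N - Suc i)) ((f ^^ Suc i) w)" by (metis comp_apply funpow_add)
      then show ?thesis by simp
    qed
    have "(f ^^ N) u = (f ^^ N) v" using dec \<open>f a = f b\<close> uv by simp
    then have "u = v" using E(2) uv by (auto dest: inj_onD)
    then show "a = b" using uv by simp
  qed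
  define c where "c = \<phi> ((f ^^ i) y)"
  have ab: "\<forall>w\<in>(f ^^ i) ` E. exp (- c - t i) \<le> exp (- \<phi> w) \<and> exp (- \<phi> w) \<le> exp (- c + t i)"
    using tb iN unfolding c_def by fastforce
  note S = stepF[OF IH(1) inj ab]
  have img: "(f ^^ Suc i) ` E = f ` ((f ^^ i) ` E)" by (simp add: image_comp)
  have bs: "birkhoff_sum f \<phi> (Suc i) y = birkhoff_sum f \<phi> i y + c"
    unfolding birkhoff_sum_def c_def by simp
  have e1: "lam ^ Suc i * exp (- birkhoff_sum f \<phi> (Suc i) y - (\<Sum>k<Suc i. t k)) =
     (lam * exp (- c - t i)) * (lam ^ i * exp (- birkhoff_sum f \<phi> i y - (\<Sum>k<i. t k)))"
    unfolding bs by (simp add: exp_add[symmetric] algebra_simps)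
  have e2: "lam ^ Suc i * exp (- birkhoff_sum f \<phi> (Suc i) y + (\<Sum>k<Suc i. t k)) =
     (lam * exp (- c + t i)) * (lam ^ i * exp (- birkhoff_sum f \<phi> i y + (\<Sum>k<i. t k)))"
    unfolding bs by (simp add: exp_add[symmetric] algebra_simps)
  have l: "lam ^ Suc i * exp (- birkhoff_sum f \<phi> (Suc i) y - (\<Sum>k<Suc i. t k)) * measure \<nu> E \<le> measure \<nu> ((f ^^ Suc i) ` E)"
  proof -
    have "lam ^ Suc i * exp (- birkhoff_sum f \<phi> (Suc i) y - (\<Sum>k<Suc i. t k)) * measure \<nu> E
       = (lam * exp (- c - t i)) * (lam ^ i * exp (- birkhoff_sum f \<phi> i y - (\<Sum>k<i. t k)) * measure \<nu> E)"
      unfolding e1 by (simp add: mult.assoc)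
    also have "\<dots> \<le> (lam * exp (- c - t i)) * measure \<nu> ((f ^^ i) ` E)"
      using IH(2) lam by (intro mult_left_mono) auto
    also have "\<dots> \<le> measure \<nu> ((f ^^ Suc i) ` E)" using S(2) img by simp
    finally show ?thesis .
  qed
  have u: "measure \<nu> ((f ^^ Suc i) ` E) \<le> lam ^ Suc i * exp (- birkhoff_sum f \<phi> (Suc i) y + (\<Sum>k<Suc i. t k)) * measure \<nu> E"
  proof -
    have "measure \<nu> ((f ^^ Suc i) ` E) \<le> (lam * exp (- c + t i)) * measure \<nu> ((f ^^ i) ` E)" using S(3) img by simp
    also have "\<dots> \<le> (lam * exp (- c + t i)) * (lam ^ i * exp (- birkhoff_sum f \<phi> i y + (\<Sum>k<i. t k)) * measure \<nu> E)"
      using IH(3) lam by (intro mult_left_mono) auto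
    also have "\<dots> = lam ^ Suc i * exp (- birkhoff_sum f \<phi> (Suc i) y + (\<Sum>k<Suc i. t k)) * measure \<nu> E"
      unfolding e2 by (simp add: mult.assoc)
    finally show ?thesis .
  qed
  show ?case using S(1) img l u by simp
qed

lemma msupp_closed: "closed (msupp M \<nu>)"
proof (rule closed_sequential_limits[THEN iffD2], intro allI impI, elim conjE)
  fix s l assume s: "\<forall>n. s n \<in> msupp M \<nu>" and lim: "s \<longlonglongrightarrow> l"
  have sM: "\<forall>n. s n \<in> M" using s unfolding msupp_def by auto
  have lM: "l \<in> M" using closed_sequentially[OF closedM _ lim] sM by blast
  show "l \<in> msupp M \<nu>" unfolding msupp_def
  proof (intro CollectI conjI lM allI impI)
    fix r :: real assume r: "0 < r"
    have "r / 2 > 0" using r by simp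
    then have "\<forall>\<^sub>F n in sequentially. dist (s n) l < r / 2" using lim unfolding tendsto_iff by blast
    then obtain n where n: "dist (s n) l < r / 2" by (meson eventually_sequentially order_refl)
    have sub: "M \<inter> ball (s n) (r / 2) \<subseteq> M \<inter> ball l r"
    proof
      fix u assume u: "u \<in> M \<inter> ball (s n) (r / 2)"
      then have "dist (s n) u < r / 2" by simp
      moreover have "dist l u \<le> dist l (s n) + dist (s n) u" by (rule dist_triangle)
      moreover have "dist l (s n) = dist (s n) l" by (rule dist_commute)
      ultimately have "dist l u < r" using n by linarith
      then show "u \<in> M \<inter> ball l r" using u by simp
    qed
    have "0 < emeasure \<nu> (M \<inter> ball (s n) (r / 2))" using s r unfolding msupp_def by auto
    also have "\<dots> \<le> emeasure \<nu> (M \<inter> ball l r)"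
      by (rule emeasure_mono[OF sub]) (rule sets_open, simp add: openin_open_Int)
    finally show "0 < emeasure \<nu> (M \<inter> ball l r)" .
  qed
qed

lemma supp_lower:
  assumes d: "0 < \<delta>"
  shows "\<exists>a>0. a \<le> 1 \<and> (\<forall>w\<in>msupp M \<nu>. a \<le> measure \<nu> (M \<inter> cball w \<delta>))"
proof (cases "msupp M \<nu> = {}")
  case True then show ?thesis by (intro exI[of _ 1]) auto
next
  case False
  have suppM: "msupp M \<nu> \<subseteq> M" unfolding msupp_def by auto
  have cs: "compact (msupp M \<nu>)"
    using compact_Int_closed[OF compM msupp_closed] suppM by (simp add: Int_absorb1)
  have "msupp M \<nu> \<subseteq> (\<Union>z\<in>msupp M \<nu>. ball z (\<delta>/2))" using d by auto
  then obtain Z where Z: "Z \<subseteq> msupp M \<nu>" "finite Z" "msupp M \<nu> \<subseteq> (\<Union>z\<in>Z. ball z (\<delta>/2))"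
    using compactE_image[OF cs, of "msupp M \<nu>" "\<lambda>z. ball z (\<delta>/2)"] by auto
  have Zne: "Z \<noteq> {}" using Z(3) False by auto
  define m where "m z = measure \<nu> (M \<inter> ball z (\<delta>/2))" for z
  have mpos: "0 < m z" if "z \<in> Z" for z
  proof -
    have "0 < emeasure \<nu> (M \<inter> ball z (\<delta>/2))" using Z(1) that d unfolding msupp_def by auto
    then show ?thesis unfolding m_def using P.emeasure_eq_measure by simp
  qed
  define a where "a = min 1 (Min (m ` Z))"
  have apos: "0 < a" unfolding a_def using Z(2) Zne mpos by auto
  show ?thesis
  proof (intro exI[of _ a] conjI apos ballI)
    show "a \<le> 1" unfolding a_def by simp
    fix w assume w: "w \<in> msupp M \<nu>"
    then obtain z where z: "z \<in> Z" "dist z w < \<delta>/2" using Z(3) by auto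
    have sub: "M \<inter> ball z (\<delta>/2) \<subseteq> M \<inter> cball w \<delta>"
    proof
      fix u assume "u \<in> M \<inter> ball z (\<delta>/2)"
      then have "u \<in> M" "dist z u < \<delta>/2" by auto
      moreover have "dist w u \<le> dist w z + dist z u" by (rule dist_triangle)
      moreover have "dist w z = dist z w" by (rule dist_commute)
      ultimately have "dist w u \<le> \<delta>" using z(2) by linarith
      then show "u \<in> M \<inter> cball w \<delta>" using \<open>u \<in> M\<close> by simp
    qed
    have "a \<le> m z" unfolding a_def using Z(2) z(1) by (simp add: min.coboundedI2)
    also have "\<dots> \<le> measure \<nu> (M \<inter> cball w \<delta>)"
      unfolding m_def by (rule P.finite_measure_mono[OF sub sets_closed]) simp
    finally show "a \<le> measure \<nu> (M \<inter> cball w \<delta>)" .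
  qed
qed

lemma iter_M: "z \<in> M \<Longrightarrow> (f ^^ j) z \<in> M"
  using f_props(1) by (induction j) auto

lemma iter_cont: "continuous_on M (f ^^ j)"
proof (induction j)
  case 0 then show ?case by (simp add: continuous_on_id)
next
  case (Suc j)
  have "continuous_on M (f \<circ> (f ^^ j))"
    by (rule continuous_on_compose[OF Suc]) (rule continuous_on_subset[OF f_props(2)], use iter_M in auto)
  then show ?case by simp
qed

lemma iter_close:
  assumes x: "x \<in> M" and e: "0 < e"
  shows "\<exists>s>0. \<forall>z\<in>M. dist z x < s \<longrightarrow> (\<forall>j\<le>N. dist ((f ^^ j) z) ((f ^^ j) x) < e)"
proof (induction N)
  case 0 then show ?case by (auto intro!: exI[of _ e] e)
next
  case (Suc N)
  then obtain s where s: "s > 0" "\<forall>z\<in>M. dist z x < s \<longrightarrow> (\<forall>j\<le>N. dist ((f ^^ j) z) ((f ^^ j) x) < e)" by blast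
  obtain s' where s': "s' > 0" "\<forall>z\<in>M. dist z x < s' \<longrightarrow> dist ((f ^^ Suc N) z) ((f ^^ Suc N) x) < e"
    using iter_cont[of "Suc N", unfolded continuous_on_iff] x e by blast
  show ?case
  proof (intro exI[of _ "min s s'"] conjI ballI impI allI)
    show "0 < min s s'" using s s' by simp
    fix z j assume "z \<in> M" "dist z x < min s s'" "j \<le> Suc N"
    then show "dist ((f ^^ j) z) ((f ^^ j) x) < e" using s s' by (cases "j = Suc N") auto
  qed
qed

end

lemma holder_cont:
  assumes "holder_on M \<phi>" shows "continuous_on M \<phi>"
proof -
  obtain C \<alpha> where H: "0 \<le> C" "0 < \<alpha>" "\<alpha> \<le> 1" "\<forall>x\<in>M. \<forall>y\<in>M. \<bar>\<phi> x - \<phi> y\<bar> \<le> C * dist x y powr \<alpha>"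
    using assms unfolding holder_on_def by blast
  show ?thesis unfolding continuous_on_iff
  proof (intro ballI allI impI)
    fix x e assume x: "x \<in> M" and e: "(0::real) < e"
    define d where "d = (e / (C + 1)) powr (1 / \<alpha>)"
    have d: "0 < d" unfolding d_def using e H by simp
    have dpow: "d powr \<alpha> = e / (C + 1)" unfolding d_def using e H by (simp add: powr_powr)
    show "\<exists>d>0. \<forall>x'\<in>M. dist x' x < d \<longrightarrow> dist (\<phi> x') (\<phi> x) < e"
    proof (intro exI[of _ d] conjI d ballI impI)
      fix x' assume x': "x' \<in> M" "dist x' x < d"
      have "dist (\<phi> x') (\<phi> x) \<le> C * dist x' x powr \<alpha>" using H(4) x x' by (simp add: dist_real_def)
      also have "\<dots> \<le> C * d powr \<alpha>" using x' H by (intro mult_left_mono powr_mono2) auto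
      also have "\<dots> = C * (e / (C + 1))" using dpow by simp
      also have "\<dots> < e" using e H by (simp add: field_simps)
      finally show "dist (\<phi> x') (\<phi> x) < e" .
    qed
  qed
qed

theorem lemma4p7:
  fixes M :: "'a::metric_space set" and f :: "'a \<Rightarrow> 'a" and Lf :: "'a \<Rightarrow> real"
    and \<phi> :: "'a \<Rightarrow> real" and m :: nat and h :: real
    and P :: "nat \<Rightarrow> 'a set" and k0 q :: nat and A :: "'a set"
    and \<epsilon>0 \<gamma> \<sigma> L c \<delta> lam :: real and \<nu> :: "'a measure"
  assumes M_compact: "compact M"
    and M_dim: "has_dimension M m"
    and M_besicovitch: "besicovitch_property M"
    and f_lh: "local_homeo M f"
    and f_fin: "\<forall>x\<in>M. finite (preim M f 1 x)"
    and f_closed: "\<forall>k::nat. closedin (top_of_set M) {x\<in>M. card (preim M f 1 x) = k}"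
    and Lf_pos: "\<forall>x\<in>M. 0 < Lf x"
    and Lf_bdd: "\<exists>B. \<forall>x\<in>M. Lf x \<le> B"
    and Lf_lip: "\<forall>x\<in>M. \<exists>U. openin (top_of_set M) U \<and> x \<in> U \<and> inj_on f U \<and>
                   (\<forall>y\<in>f ` U. \<forall>z\<in>f ` U. dist (inv_into U f y) (inv_into U f z) \<le> Lf x * dist y z)"
    and h_def: "deg_entropy M f = ereal h"
    and h_preim: "\<forall>x\<in>M. exp h \<le> real (card (preim M f 1 x))"
    and \<phi>_holder: "holder_on M \<phi>"
    and H2_cover: "(\<forall>i\<in>{1..k0}. P i \<subseteq> M \<and> inj_on f (P i)) \<and> M = (\<Union>i\<in>{1..k0}. P i)"
    and H2_A: "openin (top_of_set M) A \<and> A \<subseteq> (\<Union>i\<in>{1..q}. P i)"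
    and H2_q: "q \<le> k0" "real q < exp h"
    and P_cond: "ereal ((SUP x\<in>M. \<phi> x) - (INF x\<in>M. \<phi> x)) < ereal h - eln q"
    and eps0: "0 < \<epsilon>0"
      "ereal ((SUP x\<in>M. \<phi> x) - (INF x\<in>M. \<phi> x) + \<epsilon>0) < ereal h - eln q"
    and gamma: "0 < \<gamma>" "\<gamma> < 1" "c_gamma k0 q \<gamma> < eln q + ereal (\<epsilon>0 / 4)"
    and H1: "1 < \<sigma>" "0 < L" "0 < c"
      "\<forall>x\<in>A. Lf x \<le> L" "\<forall>x\<in>M - A. Lf x \<le> 1 / \<sigma>"
      "\<sigma> powr (- (1 - \<gamma>)) * L powr \<gamma> < exp (- 2 * c)" "exp (- 2 * c) < 1"
      "ereal ((SUP x\<in>M. \<phi> x) - (INF x\<in>M. \<phi> x))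
         < ereal h - eln q - ereal \<epsilon>0 - ereal (real m * ln L)"
    and delta: "0 < \<delta>"
      "\<forall>x\<in>M. \<forall>n. hyp_time f Lf c x n \<longrightarrow>
         (\<exists>g. homeomorphism (dyn_ball M f x n \<delta>) (M \<inter> cball ((f ^^ n) x) \<delta>) (f ^^ n) g) \<and>
         (\<forall>y\<in>dyn_ball M f x n \<delta>. \<forall>z\<in>dyn_ball M f x n \<delta>. \<forall>j\<in>{1..n}.
            dist ((f ^^ (n - j)) y) ((f ^^ (n - j)) z)
              \<le> exp (- c * real j / 2) * dist ((f ^^ n) y) ((f ^^ n) z))"
    and lambda: "exp (h + (INF x\<in>M. \<phi> x)) \<le> lam"
    and nu: "prob_space \<nu>" "sets \<nu> = sets (restrict_space borel M)"
      "\<forall>g. continuous_on M g \<longrightarrow>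
         (\<integral>x. transfer_op M f \<phi> g x \<partial>\<nu>) = lam * (\<integral>x. g x \<partial>\<nu>)"
  shows "\<exists>K>0. \<forall>x\<in>msupp M \<nu>. \<forall>n. hyp_time f Lf c x n \<longrightarrow>
           (\<forall>y\<in>dyn_ball M f x n \<delta>.
              inverse K \<le> measure \<nu> (dyn_ball M f x n \<delta>) / exp (- ln lam * real n + birkhoff_sum f \<phi> n y)
            \<and> measure \<nu> (dyn_ball M f x n \<delta>) / exp (- ln lam * real n + birkhoff_sum f \<phi> n y) \<le> K)"
proof -
  have phic: "continuous_on M \<phi>" using holder_cont[OF \<phi>_holder] .
  have lam0: "0 < lam" using lambda by (meson exp_gt_zero less_le_trans)
  interpret conf M f \<phi> lam \<nu>
    by (rule conf.intro[OF M_compact f_lh f_fin phic lam0 nu(1) nu(2) nu(3)])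
  obtain C \<alpha> where H: "0 \<le> C" "0 < \<alpha>" "\<alpha> \<le> 1" "\<forall>x\<in>M. \<forall>y\<in>M. \<bar>\<phi> x - \<phi> y\<bar> \<le> C * dist x y powr \<alpha>"
    using \<phi>_holder unfolding holder_on_def by blast
  obtain a where a: "0 < a" "a \<le> 1" "\<forall>w\<in>msupp M \<nu>. a \<le> measure \<nu> (M \<inter> cball w \<delta>)"
    using supp_lower[OF delta(1)] by blast
  define q where "q = exp (- c * \<alpha> / 2)"
  have q: "0 < q" "q < 1" unfolding q_def using H1(3) H(2) by auto
  define D where "D = C * (2 * \<delta>) powr \<alpha> / (1 - q)"
  define K where "K = exp D / a"
  have Kpos: "0 < K" unfolding K_def using a by simp
  show ?thesis
  proof (intro exI[of _ K] conjI Kpos ballI allI impI)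
    fix x n y assume x: "x \<in> msupp M \<nu>" and ht: "hyp_time f Lf c x n" and y: "y \<in> dyn_ball M f x n \<delta>"
    define B where "B = dyn_ball M f x n \<delta>"
    have xM: "x \<in> M" using x unfolding msupp_def by auto
    have D2: "(\<exists>g. homeomorphism B (M \<inter> cball ((f ^^ n) x) \<delta>) (f ^^ n) g) \<and>
         (\<forall>y\<in>B. \<forall>z\<in>B. \<forall>j\<in>{1..n}. dist ((f ^^ (n - j)) y) ((f ^^ (n - j)) z)
              \<le> exp (- c * real j / 2) * dist ((f ^^ n) y) ((f ^^ n) z))"
      using delta(2)[rule_format, OF xM ht] unfolding B_def .
    then obtain g where hom: "homeomorphism B (M \<inter> cball ((f ^^ n) x) \<delta>) (f ^^ n) g" by blast
    have contr: "\<forall>y\<in>B. \<forall>z\<in>B. \<forall>j\<in>{1..n}. dist ((f ^^ (n - j)) y) ((f ^^ (n - j)) z)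
              \<le> exp (- c * real j / 2) * dist ((f ^^ n) y) ((f ^^ n) z)" using D2 by blast
    have BM: "B \<subseteq> M" unfolding B_def dyn_ball_def by auto
    have yB: "y \<in> B" using y unfolding B_def .
    have cb: "compact (M \<inter> cball ((f ^^ n) x) \<delta>)" by (rule compact_Int_closed[OF M_compact closed_cball])
    have Bc: "compact B"
      using compact_continuous_image[OF _ cb, of g] hom unfolding homeomorphism_def by metis
    have Bs: "B \<in> sets \<nu>" using sets_compact[OF Bc BM] .
    have injB: "inj_on (f ^^ n) B" using hom unfolding homeomorphism_def by (metis inj_on_inverseI)
    have imgB: "(f ^^ n) ` B = M \<inter> cball ((f ^^ n) x) \<delta>" using hom unfolding homeomorphism_def by blast
    define t where "t i = C * (exp (- c * real (n - i) / 2) * (2 * \<delta>)) powr \<alpha>" for i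
    have tb: "\<forall>i<n. \<forall>z\<in>E. \<bar>\<phi> ((f ^^ i) z) - \<phi> ((f ^^ i) y)\<bar> \<le> t i" if EB: "E \<subseteq> B" for E
    proof (intro allI impI ballI)
      fix i z assume i: "i < n" and z: "z \<in> E"
      have zB: "z \<in> B" using z EB by blast
      have d2: "dist ((f ^^ n) z) ((f ^^ n) y) \<le> 2 * \<delta>"
      proof -
        have "dist ((f ^^ n) z) ((f ^^ n) x) \<le> \<delta>" "dist ((f ^^ n) y) ((f ^^ n) x) \<le> \<delta>"
          using zB yB unfolding B_def dyn_ball_def by auto
        then show ?thesis using dist_triangle2[of "(f ^^ n) z" "(f ^^ n) y" "(f ^^ n) x"] by linarith
      qed
      have "dist ((f ^^ (n - (n - i))) z) ((f ^^ (n - (n - i))) y)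
              \<le> exp (- c * real (n - i) / 2) * dist ((f ^^ n) z) ((f ^^ n) y)"
        using contr zB yB i by (intro contr[rule_format, OF zB yB]) auto
      moreover have "n - (n - i) = i" using i by simp
      ultimately have "dist ((f ^^ i) z) ((f ^^ i) y) \<le> exp (- c * real (n - i) / 2) * dist ((f ^^ n) z) ((f ^^ n) y)"
        by simp
      also have "\<dots> \<le> exp (- c * real (n - i) / 2) * (2 * \<delta>)"
        using d2 by (intro mult_left_mono) auto
      finally have "dist ((f ^^ i) z) ((f ^^ i) y) \<le> exp (- c * real (n - i) / 2) * (2 * \<delta>)" .
      then have "dist ((f ^^ i) z) ((f ^^ i) y) powr \<alpha> \<le> (exp (- c * real (n - i) / 2) * (2 * \<delta>)) powr \<alpha>"
        using H(2) by (intro powr_mono2) auto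
      moreover have "\<bar>\<phi> ((f ^^ i) z) - \<phi> ((f ^^ i) y)\<bar> \<le> C * dist ((f ^^ i) z) ((f ^^ i) y) powr \<alpha>"
        using H(4) iter_M zB yB BM by blast
      ultimately show "\<bar>\<phi> ((f ^^ i) z) - \<phi> ((f ^^ i) y)\<bar> \<le> t i"
        unfolding t_def using H(1) by (smt (verit) mult_left_mono)
    qed
    have TD: "(\<Sum>k<n. t k) \<le> D"
    proof -
      have tq: "t k = C * (2 * \<delta>) powr \<alpha> * q ^ (n - k)" for k
      proof -
        have "(exp (- c * real (n - k) / 2) * (2 * \<delta>)) powr \<alpha> = exp (- c * real (n - k) / 2) powr \<alpha> * (2 * \<delta>) powr \<alpha>"
          using delta(1) by (simp add: powr_mult)
        also have "exp (- c * real (n - k) / 2) powr \<alpha> = exp (real (n - k) * (- c * \<alpha> / 2))"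
          by (simp add: powr_def)
        also have "\<dots> = q ^ (n - k)" unfolding q_def by (rule exp_of_nat_mult)
        finally show ?thesis unfolding t_def by simp
      qed
      have "(\<Sum>k<n. q ^ (n - k)) \<le> (\<Sum>k<n. q ^ (n - Suc k))"
      proof (rule sum_mono)
        fix k assume "k \<in> {..<n}"
        then have "n - k = Suc (n - Suc k)" by auto
        then show "q ^ (n - k) \<le> q ^ (n - Suc k)" using q by simp
      qed
      also have "\<dots> = (\<Sum>k<n. q ^ k)" by (rule sum.nat_diff_reindex)
      also have "\<dots> = (1 - q ^ n) / (1 - q)" using q by (simp add: sum_gp_strict)
      also have "\<dots> \<le> 1 / (1 - q)" using q by (simp add: divide_right_mono)
      finally have g: "(\<Sum>k<n. q ^ (n - k)) \<le> 1 / (1 - q)" .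
      have "(\<Sum>k<n. t k) = C * (2 * \<delta>) powr \<alpha> * (\<Sum>k<n. q ^ (n - k))"
        unfolding tq by (simp add: sum_distrib_left)
      also have "\<dots> \<le> C * (2 * \<delta>) powr \<alpha> * (1 / (1 - q))"
        using g H(1) by (intro mult_left_mono) auto
      finally show ?thesis unfolding D_def by simp
    qed
    define S where "S = birkhoff_sum f \<phi> n y"
    define T where "T = (\<Sum>k<n. t k)"
    have G: "lam ^ n * exp (- S - T) * measure \<nu> E \<le> measure \<nu> ((f ^^ n) ` E) \<and>
        measure \<nu> ((f ^^ n) ` E) \<le> lam ^ n * exp (- S + T) * measure \<nu> E"
      if "E \<in> sets \<nu>" "E \<subseteq> B" for E
      using iterG[OF that(1) inj_on_subset[OF injB that(2)] tb[OF that(2)], of n] unfolding S_def T_def by auto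
    have fx: "(f ^^ n) x \<in> msupp M \<nu>"
      unfolding msupp_def
    proof (intro CollectI conjI allI impI)
      show "(f ^^ n) x \<in> M" using iter_M xM by blast
      fix r :: real assume r: "0 < r"
      define r' where "r' = min (r / 2) \<delta>"
      have r': "0 < r'" unfolding r'_def using r delta(1) by simp
      obtain s where s: "s > 0" "\<forall>z\<in>M. dist z x < s \<longrightarrow> (\<forall>j\<le>n. dist ((f ^^ j) z) ((f ^^ j) x) < r')"
        using iter_close[OF xM r'] by blast
      define E where "E = M \<inter> cball x (s / 2)"
      have EB: "E \<subseteq> B"
      proof
        fix z assume "z \<in> E"
        then have "z \<in> M" "dist z x < s" using s(1) by (auto simp: E_def dist_commute)
        then show "z \<in> B" using s(2) unfolding B_def dyn_ball_def r'_def by force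
      qed
      have Es: "E \<in> sets \<nu>" unfolding E_def by (rule sets_closed) simp
      have "0 < emeasure \<nu> (M \<inter> ball x (s / 2))" using x s(1) unfolding msupp_def by auto
      also have "\<dots> \<le> emeasure \<nu> E" unfolding E_def by (rule emeasure_mono) (auto intro: Es[unfolded E_def])
      finally have mE: "0 < measure \<nu> E" using P.emeasure_eq_measure by simp
      have "0 < lam ^ n * exp (- S - T) * measure \<nu> E" using lam0 mE by simp
      also have "\<dots> \<le> measure \<nu> ((f ^^ n) ` E)" using G[OF Es EB] by simp
      also have "\<dots> \<le> measure \<nu> (M \<inter> ball ((f ^^ n) x) r)"
      proof (rule P.finite_measure_mono)
        show "(f ^^ n) ` E \<subseteq> M \<inter> ball ((f ^^ n) x) r"
        proof
          fix w assume "w \<in> (f ^^ n) ` E"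
          then obtain z where z: "z \<in> E" "w = (f ^^ n) z" by blast
          then have "z \<in> M" "dist z x < s" using s(1) by (auto simp: E_def dist_commute)
          then have "dist w ((f ^^ n) x) < r'" using s(2) z by auto
          then have "dist ((f ^^ n) x) w < r" unfolding r'_def using r by (simp add: dist_commute)
          then show "w \<in> M \<inter> ball ((f ^^ n) x) r" using iter_M \<open>z \<in> M\<close> z by auto
        qed
        show "M \<inter> ball ((f ^^ n) x) r \<in> sets \<nu>" by (rule sets_open) (simp add: openin_open_Int)
      qed
      finally show "0 < emeasure \<nu> (M \<inter> ball ((f ^^ n) x) r)" using P.emeasure_eq_measure by simp
    qed
    have GB: "lam ^ n * exp (- S - T) * measure \<nu> B \<le> measure \<nu> ((f ^^ n) ` B)"
       "measure \<nu> ((f ^^ n) ` B) \<le> lam ^ n * exp (- S + T) * measure \<nu> B" using G[OF Bs order_refl] by auto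
    have up1: "measure \<nu> ((f ^^ n) ` B) \<le> 1" by simp
    have lo1: "a \<le> measure \<nu> ((f ^^ n) ` B)" using a(3) fx imgB by simp
    define u where "u = lam ^ n / exp S"
    have upos: "0 < u" unfolding u_def using lam0 by simp
    have den: "exp (- ln lam * real n + birkhoff_sum f \<phi> n y) = 1 / u"
    proof -
      have "exp (ln lam * real n) = exp (ln lam) ^ n" by (simp add: exp_of_nat_mult[symmetric] mult.commute)
      also have "\<dots> = lam ^ n" using lam0 by simp
      finally have "exp (ln lam * real n) = lam ^ n" .
      have "exp (- ln lam * real n + birkhoff_sum f \<phi> n y) = exp (birkhoff_sum f \<phi> n y) / exp (ln lam * real n)"
        by (simp add: exp_diff)
      then show ?thesis unfolding u_def S_def using \<open>exp (ln lam * real n) = lam ^ n\<close> by simp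
    qed
    have ratio: "measure \<nu> (dyn_ball M f x n \<delta>) / exp (- ln lam * real n + birkhoff_sum f \<phi> n y) = measure \<nu> B * u"
      unfolding den B_def using upos by simp
    have e1: "lam ^ n * exp (- S - T) = u * exp (- T)" unfolding u_def by (simp add: exp_diff exp_minus field_simps)
    have e2: "lam ^ n * exp (- S + T) = u * exp T" unfolding u_def by (simp add: exp_diff)
    have T0: "T \<le> D" using TD unfolding T_def .
    have mB0: "0 \<le> measure \<nu> B" by simp
    have U: "measure \<nu> B * u \<le> exp T"
    proof -
      have "u * exp (- T) * measure \<nu> B \<le> 1" using order_trans[OF GB(1) up1] e1 by simp
      then have "measure \<nu> B * u * exp (- T) \<le> 1" by (simp add: mult_ac)
      then show ?thesis by (simp add: exp_minus field_simps)
    qed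
    have L: "a / exp T \<le> measure \<nu> B * u"
    proof -
      have "a \<le> u * exp T * measure \<nu> B" using order_trans[OF lo1 GB(2)] e2 by simp
      then show ?thesis by (simp add: field_simps mult_ac)
    qed
    show "inverse K \<le> measure \<nu> (dyn_ball M f x n \<delta>) / exp (- ln lam * real n + birkhoff_sum f \<phi> n y)"
    proof -
      have "inverse K = a / exp D" unfolding K_def by simp
      also have "\<dots> \<le> a / exp T" using T0 a(1) by (intro divide_left_mono) auto
      finally show ?thesis unfolding ratio using L by simp
    qed
    show "measure \<nu> (dyn_ball M f x n \<delta>) / exp (- ln lam * real n + birkhoff_sum f \<phi> n y) \<le> K"
    proof -
      have "exp T \<le> exp D" using T0 by simp
      also have "\<dots> \<le> exp D / a" using a by (simp add: le_divide_eq)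
      finally show ?thesis unfolding ratio K_def using U by simp
    qed
  qed
qed

end
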